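(* Let $\alpha\in\mathbb{R}^n$ be badly approximable with constant $D=D(\alpha)>0$, i.e. $\max_{1\le j\le n}\min_{a_j\in\mathbb{Z}}|p\alpha_j-a_j|\ge Dp^{-1/n}$ for all $p\in\mathbb{N}$, and let $f$ be a strictly convex norm on $\mathbb{R}^n$. Then there exist $w=w(D,f)\in\mathbb{N}$ and $\delta=\delta(D,f)>0$ such that for every $\nu\ge1$ there is a natural $j$ with $\nu\le j\le\nu+w$ and $$\Xi_{j+1}\notin B_f^{1+\delta}(\Xi_j),$$ where $\Xi_j=\xi_j/f(\xi_j)$, $\xi_j=\alpha p_j-a_j$, and $(p_j,a_j)$ is the $j$-th $f$-best simultaneous approximation to $\alpha$.
   Context: A norm $f$ here is a continuous function $\mathbb{R}^n\to\mathbb{R}_+$ with $f(x)=0\iff x=0$, $f(-x)=f(x)$, $f(tx)=tf(x)$ for $t\ge0$, and convex unit ball $B_f^1=\{y:f(y)\le1\}$ with $0$ in its interior; $f$ is strictly convex if $B_f^1$ is strictly convex (its boundary contains no line segments). $B_f^\lambda(a)=\{y: f(y-a)\le\lambda\}$. For $\alpha\in\mathbb{R}^n$, an $f$-best simultaneous approximation is an integer point $\tau=(p,a_1,\dots,a_n)\in\mathbb{Z}^{n+1}$ with $p\ge1$ such that $f(\alpha q-b)>f(\alpha p-a)$ for all $(q,b)\in\mathbb{Z}^{n+1}$ with $1\le q\le p-1$ and for all $(p,b)$ with $b\ne a$. They form a sequence $(p_\nu,a_\nu)$ with $p_1<p_2<\dots$. *)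

theory Defs
  imports "HOL-Analysis.Analysis"
begin

definition is_norm_fun :: "(real ^ 'n \<Rightarrow> real) \<Rightarrow> bool" where
  "is_norm_fun f \<longleftrightarrow>
     continuous_on UNIV f \<and>
     (\<forall>x. f x \<ge> 0) \<and>
     (\<forall>x. f x = 0 \<longleftrightarrow> x = 0) \<and>
     (\<forall>x. f (- x) = f x) \<and>
     (\<forall>t x. t \<ge> 0 \<longrightarrow> f (t *\<^sub>R x) = t * f x) \<and>
     convex {y. f y \<le> 1} \<and>
     0 \<in> interior {y. f y \<le> 1}"

definition strictly_convex_norm :: "(real ^ 'n \<Rightarrow> real) \<Rightarrow> bool" where
  "strictly_convex_norm f \<longleftrightarrow> is_norm_fun f \<and>
     \<not> (\<exists>x y. x \<noteq> y \<and> closed_segment x y \<subseteq> frontier {z. f z \<le> 1})"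

definition fball :: "(real ^ 'n \<Rightarrow> real) \<Rightarrow> real \<Rightarrow> real ^ 'n \<Rightarrow> (real ^ 'n) set" where
  "fball f l a = {y. f (y - a) \<le> l}"

definition approx_vec :: "real ^ 'n \<Rightarrow> nat \<Rightarrow> int ^ 'n \<Rightarrow> real ^ 'n" where
  "approx_vec \<alpha> q b = (\<chi> i. real q * \<alpha> $ i - of_int (b $ i))"

definition best_approx :: "(real ^ 'n \<Rightarrow> real) \<Rightarrow> real ^ 'n \<Rightarrow> nat \<Rightarrow> int ^ 'n \<Rightarrow> bool" where
  "best_approx f \<alpha> p a \<longleftrightarrow> p \<ge> 1 \<and>
     (\<forall>q b. 1 \<le> q \<and> q \<le> p - 1 \<longrightarrow> f (approx_vec \<alpha> q b) > f (approx_vec \<alpha> p a)) \<and>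
     (\<forall>b. b \<noteq> a \<longrightarrow> f (approx_vec \<alpha> p b) > f (approx_vec \<alpha> p a))"

definition badly_approx_const :: "real ^ 'n \<Rightarrow> real \<Rightarrow> bool" where
  "badly_approx_const \<alpha> D \<longleftrightarrow>
     (\<forall>p::nat. p \<ge> 1 \<longrightarrow>
        Max (range (\<lambda>j. INF a::int. \<bar>real p * \<alpha> $ j - of_int a\<bar>))
          \<ge> D * real p powr (- 1 / real CARD('n)))"

end

theory Submission
  imports Defs
begin


lemma nf_nonneg: "is_norm_fun f \<Longrightarrow> 0 \<le> f x"
  by (simp add: is_norm_fun_def)

lemma nf_zero: "is_norm_fun f \<Longrightarrow> f x = 0 \<longleftrightarrow> x = 0"
  by (simp add: is_norm_fun_def)

lemma nf_neg: "is_norm_fun f \<Longrightarrow> f (- x) = f x"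
  by (simp add: is_norm_fun_def)

lemma nf_hom: "is_norm_fun f \<Longrightarrow> 0 \<le> t \<Longrightarrow> f (t *\<^sub>R x) = t * f x"
  by (simp add: is_norm_fun_def)

lemma nf_hom_abs: "is_norm_fun f \<Longrightarrow> f (t *\<^sub>R x) = \<bar>t\<bar> * f x"
proof (cases "t \<ge> 0")
  case True assume "is_norm_fun f" then show ?thesis using True nf_hom by auto
next
  case False assume nf: "is_norm_fun f"
  have "f ((-t) *\<^sub>R x) = (-t) * f x" using nf_hom[OF nf, of "-t" x] False by simp
  moreover have "f ((-t) *\<^sub>R x) = f (t *\<^sub>R x)" using nf_neg[OF nf, of "t *\<^sub>R x"] by simp
  ultimately show ?thesis using False by simp
qed

lemma nf_sym: "is_norm_fun f \<Longrightarrow> f (x - y) = f (y - x)"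
  using nf_neg[of f "y - x"] by simp

lemma nf_cont: "is_norm_fun f \<Longrightarrow> isCont f x"
  by (simp add: is_norm_fun_def continuous_on_eq_continuous_at)

lemma nf_tri: assumes nf: "is_norm_fun f" shows "f (x + y) \<le> f x + f y"
proof (cases "x = 0 \<or> y = 0")
  case True then show ?thesis using nf_nonneg[OF nf] by auto
next
  case False
  define A where "A = f x" define B where "B = f y"
  have A: "A > 0" using False nf_zero[OF nf, of x] nf_nonneg[OF nf, of x] A_def by force
  have B: "B > 0" using False nf_zero[OF nf, of y] nf_nonneg[OF nf, of y] B_def by force
  have x1: "f ((1/A) *\<^sub>R x) \<le> 1" using nf_hom[OF nf, of "1/A" x] A A_def by simp
  have y1: "f ((1/B) *\<^sub>R y) \<le> 1" using nf_hom[OF nf, of "1/B" y] B B_def by simp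
  have cv: "convex {y. f y \<le> 1}" using nf by (simp add: is_norm_fun_def)
  have "f ((A/(A+B)) *\<^sub>R ((1/A) *\<^sub>R x) + (B/(A+B)) *\<^sub>R ((1/B) *\<^sub>R y)) \<le> 1"
    using convexD[OF cv, of "(1/A) *\<^sub>R x" "(1/B) *\<^sub>R y" "A/(A+B)" "B/(A+B)"] x1 y1 A B
    by (simp add: add_divide_distrib[symmetric])
  moreover have "(A/(A+B)) *\<^sub>R ((1/A) *\<^sub>R x) + (B/(A+B)) *\<^sub>R ((1/B) *\<^sub>R y) = (1/(A+B)) *\<^sub>R (x + y)"
    using A B by (simp add: scaleR_add_right)
  ultimately have "f ((1/(A+B)) *\<^sub>R (x + y)) \<le> 1" by simp
  then have "(1/(A+B)) * f (x + y) \<le> 1" using nf_hom[OF nf, of "1/(A+B)" "x+y"] A B by simp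
  then show ?thesis using A B A_def B_def by (simp add: field_simps)
qed

lemma nf_diff_le: assumes nf: "is_norm_fun f" shows "f (x - y) \<le> f x + f y"
  using nf_tri[OF nf, of x "- y"] nf_neg[OF nf, of y] by simp

lemma nf_convex: assumes nf: "is_norm_fun f" and l: "0 \<le> l" "l \<le> 1"
  shows "f ((1 - l) *\<^sub>R x + l *\<^sub>R y) \<le> (1 - l) * f x + l * f y"
  using nf_tri[OF nf, of "(1 - l) *\<^sub>R x" "l *\<^sub>R y"] nf_hom[OF nf, of "1-l" x] nf_hom[OF nf, of l y] l
  by simp

lemma nf_upper: assumes nf: "is_norm_fun f" shows "\<exists>C>0. \<forall>x. f x \<le> C * norm x"
proof -
  have "0 \<in> interior {y. f y \<le> 1}" using nf by (simp add: is_norm_fun_def)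
  then obtain e where e: "e > 0" "ball 0 e \<subseteq> {y. f y \<le> 1}"
    using mem_interior by blast
  have "f x \<le> (2/e) * norm x" for x
  proof (cases "x = 0")
    case True then show ?thesis using nf_zero[OF nf, of 0] by simp
  next
    case False
    then have nx: "norm x > 0" by simp
    have "(e/(2*norm x)) *\<^sub>R x \<in> ball 0 e" using e nx by simp
    then have "f ((e/(2*norm x)) *\<^sub>R x) \<le> 1" using e by blast
    then have "(e/(2*norm x)) * f x \<le> 1" using nf_hom[OF nf, of "e/(2*norm x)" x] e nx by simp
    then show ?thesis using e nx by (simp add: field_simps)
  qed
  then show ?thesis using e by (intro exI[of _ "2/e"]) auto
qed

lemma nf_lower: fixes f :: "real^'n \<Rightarrow> real" assumes nf: "is_norm_fun f" shows "\<exists>c>0. \<forall>x. c * norm x \<le> f x"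
proof -
  have ne: "sphere (0::real^'n) 1 \<noteq> {}"
  proof -
    obtain b :: "real^'n" where "b \<in> Basis" using nonempty_Basis by blast
    then have "b \<in> sphere 0 1" by simp
    then show ?thesis by blast
  qed
  have co: "continuous_on (sphere 0 1) f" using nf unfolding is_norm_fun_def
    using continuous_on_subset by blast
  obtain x0 where x0: "x0 \<in> sphere (0::real^'n) 1" "\<forall>y\<in>sphere 0 1. f x0 \<le> f y"
    using continuous_attains_inf[OF compact_sphere ne co] by blast
  have c: "f x0 > 0" using x0(1) nf_zero[OF nf, of x0] nf_nonneg[OF nf, of x0] by force
  have "f x0 * norm x \<le> f x" for x
  proof (cases "x = 0")
    case True then show ?thesis using nf_zero[OF nf, of 0] by simp
  next
    case False
    then have nx: "norm x > 0" by simp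
    have "(1/norm x) *\<^sub>R x \<in> sphere 0 1" using nx by simp
    then have "f x0 \<le> f ((1/norm x) *\<^sub>R x)" using x0 by blast
    also have "\<dots> = f x / norm x" using nf_hom[OF nf, of "1/norm x" x] nx by simp
    finally show ?thesis using nx by (simp add: field_simps)
  qed
  then show ?thesis using c by blast
qed

lemma nf_frontier: assumes nf: "is_norm_fun f" and fx: "f x = 1"
  shows "x \<in> frontier {z. f z \<le> 1}"
proof -
  have cl: "closed {z. f z \<le> 1}"
    using nf unfolding is_norm_fun_def
    by (intro closed_Collect_le) (auto simp: continuous_on_const)
  have "x \<notin> interior {z. f z \<le> 1}"
  proof
    assume "x \<in> interior {z. f z \<le> 1}"
    then obtain e where e: "e > 0" "ball x e \<subseteq> {z. f z \<le> 1}" using mem_interior by blast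
    have x0: "x \<noteq> 0" using fx nf_zero[OF nf, of x] by auto
    then have nx: "norm x > 0" by simp
    let ?y = "(1 + e/(2*norm x)) *\<^sub>R x"
    have "dist x ?y = e/2" using nx e by (simp add: dist_norm algebra_simps)
    then have "?y \<in> ball x e" using e by simp
    then have "f ?y \<le> 1" using e by blast
    moreover have "f ?y = 1 + e/(2*norm x)" using nf_hom[OF nf, of "1 + e/(2*norm x)" x] fx e nx by simp
    ultimately show False using e nx by (simp add: field_simps)
  qed
  then show ?thesis using cl fx by (simp add: frontier_def)
qed



lemma shell:
  fixes f :: "real^'n \<Rightarrow> real"
  assumes nf: "is_norm_fun f" and fu: "f u = 1" and fv: "f v = 1" and r: "0 < r" "r < \<rho>" and rho: "\<rho> < 1"
    and h1: "1 \<le> f (u - r *\<^sub>R v)" and h2: "f (u - v) \<le> 1 + \<delta>" and d: "0 \<le> \<delta>"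
    and t: "0 \<le> t" "t \<le> 1"
  shows "\<bar>f (u - t *\<^sub>R v) - 1\<bar> \<le> \<delta> / (1 - \<rho>)"
proof -
  have rho1: "0 < 1 - \<rho>" "1 - \<rho> \<le> 1" using r rho by auto
  have dd: "\<delta> \<le> \<delta> / (1 - \<rho>)" using rho1 d by (simp add: le_divide_eq) (simp add: mult_left_le_one_le algebra_simps)
  have "u - t *\<^sub>R v = (1 - t) *\<^sub>R u + t *\<^sub>R (u - v)" by (simp add: algebra_simps)
  then have "f (u - t *\<^sub>R v) \<le> (1 - t) * f u + t * f (u - v)" using nf_convex[OF nf t] by simp
  also have "\<dots> \<le> (1 - t) + t * (1 + \<delta>)" using fu h2 t by (simp add: mult_left_mono)
  finally have up: "f (u - t *\<^sub>R v) \<le> 1 + \<delta>" using t d by (simp add: algebra_simps)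
       (smt (verit) mult_left_le_one_le mult.commute)
  have low: "f (u - t *\<^sub>R v) \<ge> 1 - \<delta> / (1 - \<rho>)"
  proof (cases "r \<le> t")
    case True
    define l where "l = r / t"
    have tp: "t > 0" using True r by simp
    have l: "0 \<le> l" "l \<le> 1" "l > 0" using True r tp by (auto simp: l_def)
    have lt: "l * t = r" using tp by (simp add: l_def)
    have "u - r *\<^sub>R v = (1 - l) *\<^sub>R u + l *\<^sub>R (u - t *\<^sub>R v)"
      using lt by (simp add: algebra_simps flip: lt)
    then have "1 \<le> (1 - l) * f u + l * f (u - t *\<^sub>R v)" using h1 nf_convex[OF nf l(1,2), of u "u - t *\<^sub>R v"] by (metis order_trans)
    then have "1 \<le> (1 - l) + l * f (u - t *\<^sub>R v)" using fu by simp
    then have "l * 1 \<le> l * f (u - t *\<^sub>R v)" by simp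
    then have "1 \<le> f (u - t *\<^sub>R v)" using l(3) by simp
    moreover have "0 \<le> \<delta> / (1 - \<rho>)" using d rho1 by simp
    ultimately show ?thesis by simp
  next
    case False
    define l where "l = (r - t) / (1 - t)"
    have t1: "t < 1" using False r rho by simp
    have l: "0 \<le> l" "l \<le> 1" using False t1 r rho by (auto simp: l_def divide_simps)
    have lm: "l * (1 - t) = r - t" using t1 by (simp add: l_def)
    have eq1: "(1 - l) * t + l = r" using lm by (simp add: algebra_simps)
    have "u - r *\<^sub>R v = (1 - l) *\<^sub>R (u - t *\<^sub>R v) + l *\<^sub>R (u - v)"
      by (simp add: algebra_simps flip: eq1)
    then have "1 \<le> (1 - l) * f (u - t *\<^sub>R v) + l * f (u - v)" using h1 nf_convex[OF nf l, of "u - t *\<^sub>R v" "u - v"] by (metis order_trans)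
    then have A: "1 \<le> (1 - l) * f (u - t *\<^sub>R v) + l * (1 + \<delta>)" using h2 l
      by (smt (verit) mult_left_mono)
    have oml: "1 - l = (1 - r) / (1 - t)" using t1 by (simp add: l_def field_simps)
    have omlp: "1 - l > 0" using oml t1 r rho by simp
    have "1 - f (u - t *\<^sub>R v) \<le> l * \<delta> / (1 - l)"
      using A omlp by (simp add: field_simps)
    also have "l * \<delta> / (1 - l) = (r - t) * \<delta> / (1 - r)"
    proof -
      have oml2: "(1 - l) * (1 - t) = 1 - r" using lm by (simp add: algebra_simps)
      have key: "l * (1 - r) = (r - t) * (1 - l)"
        by (metis oml2 lm mult.assoc mult.commute)
      have "l * \<delta> * (1 - r) = (r - t) * \<delta> * (1 - l)" using key
        by (metis mult.assoc mult.commute)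
      then show ?thesis using omlp r rho by (simp add: frac_eq_eq)
    qed
    also have "\<dots> \<le> \<delta> / (1 - \<rho>)"
    proof -
      have "(r - t) * \<delta> \<le> 1 * \<delta>" using d r rho t by (intro mult_right_mono) auto
      moreover have "1 - \<rho> \<le> 1 - r" using r by simp
      ultimately have "(r - t) * \<delta> / (1 - r) \<le> \<delta> / (1 - r)" using r rho
        by (simp add: divide_right_mono)
      also have "\<dots> \<le> \<delta> / (1 - \<rho>)" using rho1 r d by (intro divide_left_mono) auto
      finally show ?thesis .
    qed
    finally show ?thesis by simp
  qed
  show ?thesis using up low dd by (simp add: abs_le_iff)
qed



lemma unit_sphere_compact:
  fixes f :: "real^'n \<Rightarrow> real"
  assumes nf: "is_norm_fun f"
  shows "compact {x. f x = 1}"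
proof -
  obtain c where c: "c > 0" "\<forall>x. c * norm x \<le> f x" using nf_lower[OF nf] by blast
  have "closed {x. f x = 1}"
    using nf unfolding is_norm_fun_def by (intro closed_Collect_eq) (auto simp: continuous_on_const)
  moreover have "bounded {x. f x = 1}"
  proof -
    have "norm x \<le> 1/c" if "f x = 1" for x
      using c(2)[rule_format, of x] that c(1) by (simp add: field_simps mult.commute)
    then show ?thesis unfolding bounded_iff by blast
  qed
  ultimately show ?thesis by (simp add: compact_eq_bounded_closed)
qed

lemma geo_delta:
  fixes f :: "real^'n \<Rightarrow> real"
  assumes sc: "strictly_convex_norm f" and rho: "\<rho> < 1"
  shows "\<exists>\<delta>>0. \<forall>u v r. f u = 1 \<longrightarrow> f v = 1 \<longrightarrow> 0 < r \<longrightarrow> r < \<rho> \<longrightarrow>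
            1 \<le> f (u - r *\<^sub>R v) \<longrightarrow> f (u - v) \<le> 1 + \<delta> \<longrightarrow> False"
proof (rule ccontr)
  assume H: "\<not> ?thesis"
  have nf: "is_norm_fun f" using sc by (simp add: strictly_convex_norm_def)
  let ?P = "\<lambda>k u v r. f u = 1 \<and> f v = 1 \<and> 0 < r \<and> r < \<rho> \<and>
            1 \<le> f (u - r *\<^sub>R v) \<and> f (u - v) \<le> 1 + inverse (real (Suc k))"
  have "\<forall>k. \<exists>w. ?P k (fst w) (fst (snd w)) (snd (snd w))"
  proof
    fix k
    have "inverse (real (Suc k)) > 0" by simp
    then obtain u v r where "?P k u v r" using H by blast
    then show "\<exists>w. ?P k (fst w) (fst (snd w)) (snd (snd w))"
      by (intro exI[of _ "(u, v, r)"]) simp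
  qed
  then obtain W where W: "\<forall>k. ?P k (fst (W k)) (fst (snd (W k))) (snd (snd (W k)))"
    by metis
  define U where "U k = fst (W k)" for k
  define V where "V k = fst (snd (W k))" for k
  define R where "R k = snd (snd (W k))" for k
  have P: "?P k (U k) (V k) (R k)" for k using W unfolding U_def V_def R_def by blast
  let ?S = "{x. f x = 1} \<times> {x. f x = 1}"
  have cS: "compact ?S" using unit_sphere_compact[OF nf] by (intro compact_Times)
  have inS: "\<forall>k. (U k, V k) \<in> ?S" using P by simp
  obtain l \<sigma> where l: "l \<in> ?S" "strict_mono \<sigma>" "((\<lambda>k. (U k, V k)) \<circ> \<sigma>) \<longlonglongrightarrow> l"
    using seq_compactE[OF compact_imp_seq_compact[OF cS] inS] by blast
  obtain u0 v0 where l0: "l = (u0, v0)" by (cases l)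
  have fu0: "f u0 = 1" and fv0: "f v0 = 1" using l(1) l0 by auto
  have Ul: "(\<lambda>k. U (\<sigma> k)) \<longlonglongrightarrow> u0" using tendsto_fst[OF l(3)] l0 by (simp add: o_def)
  have Vl: "(\<lambda>k. V (\<sigma> k)) \<longlonglongrightarrow> v0" using tendsto_snd[OF l(3)] l0 by (simp add: o_def)
  have rho0: "0 < \<rho>" using P[of 0] by linarith
  have on: "f (u0 - t *\<^sub>R v0) = 1" if t: "0 \<le> t" "t \<le> 1" for t
  proof -
    have lim1: "(\<lambda>k. f (U (\<sigma> k) - t *\<^sub>R V (\<sigma> k))) \<longlonglongrightarrow> f (u0 - t *\<^sub>R v0)"
      by (intro isCont_tendsto_compose[OF nf_cont[OF nf]] tendsto_intros Ul Vl)
    have lim2: "(\<lambda>k. \<bar>f (U (\<sigma> k) - t *\<^sub>R V (\<sigma> k)) - 1\<bar>) \<longlonglongrightarrow> \<bar>f (u0 - t *\<^sub>R v0) - 1\<bar>"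
      by (intro tendsto_intros lim1)
    have lim3: "(\<lambda>k. inverse (real (Suc (\<sigma> k))) / (1 - \<rho>)) \<longlonglongrightarrow> 0"
      using tendsto_divide_zero[OF LIMSEQ_subseq_LIMSEQ[OF LIMSEQ_inverse_real_of_nat l(2)], of "1 - \<rho>"]
      by (simp add: o_def)
    have bnd: "\<bar>f (U (\<sigma> k) - t *\<^sub>R V (\<sigma> k)) - 1\<bar> \<le> inverse (real (Suc (\<sigma> k))) / (1 - \<rho>)" for k
      using P[of "\<sigma> k"] rho t
      by (intro shell[OF nf]) auto
    have "\<bar>f (u0 - t *\<^sub>R v0) - 1\<bar> \<le> 0"
      using LIMSEQ_le[OF lim2 lim3] bnd by blast
    then show ?thesis by simp
  qed
  have v00: "v0 \<noteq> 0" using fv0 nf_zero[OF nf, of 0] by auto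
  have "closed_segment u0 (u0 - v0) \<subseteq> frontier {z. f z \<le> 1}"
  proof
    fix z assume "z \<in> closed_segment u0 (u0 - v0)"
    then obtain t where t: "0 \<le> t" "t \<le> 1" "z = (1 - t) *\<^sub>R u0 + t *\<^sub>R (u0 - v0)"
      unfolding closed_segment_def by blast
    have "z = u0 - t *\<^sub>R v0" using t(3) by (simp add: algebra_simps)
    then show "z \<in> frontier {z. f z \<le> 1}" using on[OF t(1,2)] nf_frontier[OF nf] by simp
  qed
  moreover have "u0 \<noteq> u0 - v0" using v00 by simp
  ultimately show False using sc unfolding strictly_convex_norm_def by blast
qed



lemma unit_ball_compact:
  fixes f :: "real^'n \<Rightarrow> real"
  assumes nf: "is_norm_fun f"
  shows "compact {x. f x \<le> 1}"
proof -
  obtain c where c: "c > 0" "\<forall>x. c * norm x \<le> f x" using nf_lower[OF nf] by blast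
  have "closed {x. f x \<le> 1}"
    using nf unfolding is_norm_fun_def by (intro closed_Collect_le) (auto simp: continuous_on_const)
  moreover have "bounded {x. f x \<le> 1}"
  proof -
    have "norm x \<le> 1/c" if "f x \<le> 1" for x
      using c(2)[rule_format, of x] that c(1) by (simp add: field_simps mult.commute)
    then show ?thesis unfolding bounded_iff by blast
  qed
  ultimately show ?thesis by (simp add: compact_eq_bounded_closed)
qed

lemma packing:
  fixes f :: "real^'n \<Rightarrow> real"
  assumes nf: "is_norm_fun f"
  shows "\<exists>N. \<forall>P. P \<subseteq> {x. f x \<le> 1} \<longrightarrow> (\<forall>x\<in>P. \<forall>y\<in>P. x \<noteq> y \<longrightarrow> 1/2 < f (x - y)) \<longrightarrow> card P \<le> N"
proof -
  obtain C where C: "C > 0" "\<forall>x. f x \<le> C * norm x" using nf_upper[OF nf] by blast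
  define e where "e = 1 / (4 * C)"
  have e: "e > 0" using C by (simp add: e_def)
  let ?B = "{x. f x \<le> 1}"
  have "?B \<subseteq> (\<Union>x\<in>?B. ball x e)" using e by auto
  then obtain K where K: "K \<subseteq> ?B" "finite K" "?B \<subseteq> (\<Union>c\<in>K. ball c e)"
    using compactE_image[OF unit_ball_compact[OF nf], of ?B "\<lambda>x. ball x e"] by auto
  have "card P \<le> card K" if P: "P \<subseteq> ?B" "\<forall>x\<in>P. \<forall>y\<in>P. x \<noteq> y \<longrightarrow> 1/2 < f (x - y)" for P
  proof -
    define \<phi> where "\<phi> x = (SOME c. c \<in> K \<and> x \<in> ball c e)" for x
    have phi: "\<phi> x \<in> K \<and> x \<in> ball (\<phi> x) e" if "x \<in> P" for x
    proof -
      have "\<exists>c. c \<in> K \<and> x \<in> ball c e" using K(3) P(1) that by blast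
      then show ?thesis unfolding \<phi>_def by (rule someI_ex)
    qed
    have "inj_on \<phi> P"
    proof (rule inj_onI, rule ccontr)
      fix x y assume xy: "x \<in> P" "y \<in> P" "\<phi> x = \<phi> y" "x \<noteq> y"
      have "dist (\<phi> x) x < e" "dist (\<phi> x) y < e" using phi[OF xy(1)] phi[OF xy(2)] xy(3) by auto
      then have "norm (x - y) < 2 * e" by (metis dist_norm dist_triangle_lt dist_commute mult_2 add_strict_mono)
      then have "C * norm (x - y) < C * (2 * e)" using C(1) by simp
      then have "f (x - y) < 1/2" using C(2)[rule_format, of "x - y"] C(1) by (simp add: e_def)
      then show False using P(2) xy by force
    qed
    moreover have "\<phi> ` P \<subseteq> K" using phi by blast
    ultimately show ?thesis using card_inj_on_le K(2) by blast
  qed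
  then show ?thesis by blast
qed



lemma finite_intvec: "finite {b::int^'n. \<forall>i. \<bar>b$i\<bar> \<le> L}"
proof -
  have "{b::int^'n. \<forall>i. \<bar>b$i\<bar> \<le> L} \<subseteq> (\<lambda>g. \<chi> i. g i) ` (\<Pi>\<^sub>E i\<in>UNIV. {-L..L})"
  proof
    fix b :: "int^'n" assume "b \<in> {b. \<forall>i. \<bar>b$i\<bar> \<le> L}"
    then have "(\<lambda>i. b$i) \<in> (\<Pi>\<^sub>E i\<in>UNIV. {-L..L})" by (auto simp: PiE_iff abs_le_iff) (metis minus_le_iff)
    moreover have "b = (\<chi> i. (\<lambda>i. b$i) i)" by simp
    ultimately show "b \<in> (\<lambda>g. \<chi> i. g i) ` (\<Pi>\<^sub>E i\<in>UNIV. {-L..L})" by blast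
  qed
  moreover have "finite ((\<lambda>g. \<chi> i. g i) ` (\<Pi>\<^sub>E i\<in>(UNIV::'n set). {-L..L}))"
    by (intro finite_imageI finite_PiE) auto
  ultimately show ?thesis by (rule finite_subset)
qed

lemma approx_diff: "q' \<le> q \<Longrightarrow> approx_vec \<alpha> q b - approx_vec \<alpha> q' b' = approx_vec \<alpha> (q - q') (b - b')"
  by (simp add: approx_vec_def vec_eq_iff of_nat_diff algebra_simps)

locale bseq =
  fixes f :: "real^'n \<Rightarrow> real" and \<alpha> :: "real^'n" and p :: "nat \<Rightarrow> nat" and a :: "nat \<Rightarrow> int^'n"
  assumes nf: "is_norm_fun f" and mono: "strict_mono_on {1..} p"
   and ba: "\<forall>\<nu>\<ge>1. best_approx f \<alpha> (p \<nu>) (a \<nu>)"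
   and all: "\<forall>q b. best_approx f \<alpha> q b \<longrightarrow> (\<exists>\<nu>\<ge>1. q = p \<nu> \<and> b = a \<nu>)"
begin

definition xi where "xi k = approx_vec \<alpha> (p k) (a k)"
definition z where "z k = f (xi k)"

lemma p_less: "1 \<le> i \<Longrightarrow> i < k \<Longrightarrow> p i < p k"
  using mono by (simp add: strict_mono_on_def)

lemma p_pos: "1 \<le> i \<Longrightarrow> 1 \<le> p i"
  using ba by (simp add: best_approx_def)

lemma sep: assumes "1 \<le> i" "i < k" shows "z k < f (xi k - xi i)"
proof -
  have lt: "p i < p k" using p_less assms by blast
  have b: "best_approx f \<alpha> (p k) (a k)" using ba assms by simp
  have "xi k - xi i = approx_vec \<alpha> (p k - p i) (a k - a i)" using lt by (simp add: xi_def approx_diff)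
  moreover have "1 \<le> p k - p i" "p k - p i \<le> p k - 1" using lt p_pos[OF assms(1)] by auto
  ultimately show ?thesis using b unfolding best_approx_def z_def xi_def by auto
qed

lemma z_dec: assumes "1 \<le> i" "i < k" shows "z k < z i"
proof -
  have lt: "p i < p k" using p_less assms by blast
  have b: "best_approx f \<alpha> (p k) (a k)" using ba assms by simp
  have "1 \<le> p i" "p i \<le> p k - 1" using lt p_pos[OF assms(1)] by auto
  then show ?thesis using b unfolding best_approx_def z_def xi_def by auto
qed

lemma z_le: "1 \<le> i \<Longrightarrow> i \<le> k \<Longrightarrow> z k \<le> z i"
  using z_dec by (cases "i = k") (auto simp: less_le)

lemma z_pos: "1 \<le> i \<Longrightarrow> 0 < z i"
  using z_dec[of i "Suc i"] nf_nonneg[OF nf, of "xi (Suc i)"] by (simp add: z_def)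

lemma z_bound: assumes C: "\<forall>x. f x \<le> C * norm x" and i: "1 \<le> i"
  shows "z i \<le> C * real CARD('n)"
proof -
  define b0 :: "int^'n" where "b0 = (\<chi> k. \<lfloor>real (p i) * \<alpha>$k\<rfloor>)"
  have bi: "best_approx f \<alpha> (p i) (a i)" using ba i by simp
  have "z i \<le> f (approx_vec \<alpha> (p i) b0)"
    using bi unfolding best_approx_def z_def xi_def by (cases "b0 = a i") (auto intro: less_imp_le)
  also have "\<dots> \<le> C * norm (approx_vec \<alpha> (p i) b0)" using C by blast
  also have "\<dots> \<le> C * real CARD('n)"
  proof -
    have "norm (approx_vec \<alpha> (p i) b0) \<le> (\<Sum>k\<in>UNIV. \<bar>approx_vec \<alpha> (p i) b0 $ k\<bar>)"
      by (rule norm_le_l1_cart)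
    also have "\<dots> \<le> (\<Sum>k\<in>(UNIV::'n set). 1)"
    proof (intro sum_mono)
      fix k
      have "approx_vec \<alpha> (p i) b0 $ k = real (p i) * \<alpha>$k - of_int \<lfloor>real (p i) * \<alpha>$k\<rfloor>"
        by (simp add: approx_vec_def b0_def)
      then show "\<bar>approx_vec \<alpha> (p i) b0 $ k\<bar> \<le> 1"
        by (smt (verit) of_int_floor_le real_of_int_floor_add_one_gt)
    qed
    finally have "norm (approx_vec \<alpha> (p i) b0) \<le> real CARD('n)" by simp
    moreover have "C \<ge> 0"
    proof -
      obtain x :: "real^'n" where "x \<noteq> 0" using nonempty_Basis zero_not_in_Basis by (metis ex_in_conv)
      then have "0 < f x" using nf_zero[OF nf, of x] nf_nonneg[OF nf, of x] by simp
      then have "0 < C * norm x" using C by (meson less_le_trans)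
      then show ?thesis using \<open>x \<noteq> 0\<close> by (simp add: zero_less_mult_iff)
    qed
    ultimately show ?thesis by (simp add: mult_left_mono)
  qed
  finally show ?thesis .
qed

end


context bseq begin

lemma key:
  assumes c: "c > 0" "\<forall>x. c * norm x \<le> f x" and j: "1 \<le> j" and zj: "z j < c / 2"
  shows "z j \<le> f (xi (Suc j) - xi j)"
proof (rule ccontr)
  assume H: "\<not> z j \<le> f (xi (Suc j) - xi j)"
  define P where "P = p (Suc j)"
  define F where "F = (\<lambda>s. f (approx_vec \<alpha> (fst s) (snd s)))"
  define S where "S = {s. 1 \<le> fst s \<and> fst s \<le> P - 1 \<and> F s < z j}"
  have ltP: "p j < P" using p_less[of j "Suc j"] j by (simp add: P_def)
  have pj1: "1 \<le> p j" using p_pos[OF j] .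
  have s0: "(P - p j, a (Suc j) - a j) \<in> S"
  proof -
    have "xi (Suc j) - xi j = approx_vec \<alpha> (P - p j) (a (Suc j) - a j)"
      using ltP by (simp add: xi_def approx_diff P_def)
    then show ?thesis using H ltP pj1 by (auto simp: S_def F_def)
  qed
  have finS: "finite S"
  proof -
    define L where "L = \<lceil>real P * norm \<alpha> + z j / c\<rceil>"
    have "S \<subseteq> {1..P} \<times> {b::int^'n. \<forall>i. \<bar>b$i\<bar> \<le> L}"
    proof
      fix s assume sS: "s \<in> S"
      obtain q b where s: "s = (q, b)" by (cases s)
      have q: "1 \<le> q" "q \<le> P - 1" "f (approx_vec \<alpha> q b) < z j" using sS s by (auto simp: S_def F_def)
      have "\<bar>b$i\<bar> \<le> L" for i
      proof -
        have "c * norm (approx_vec \<alpha> q b) < z j" using c(2) q(3) by (meson le_less_trans)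
        then have nb: "norm (approx_vec \<alpha> q b) < z j / c" using c(1) by (simp add: field_simps mult.commute)
        have "\<bar>approx_vec \<alpha> q b $ i\<bar> \<le> norm (approx_vec \<alpha> q b)" by (rule component_le_norm_cart)
        moreover have "approx_vec \<alpha> q b $ i = real q * \<alpha>$i - of_int (b$i)" by (simp add: approx_vec_def)
        moreover have "\<bar>\<alpha>$i\<bar> \<le> norm \<alpha>" by (rule component_le_norm_cart)
        moreover have "real q \<le> real P" using q by simp
        ultimately have "\<bar>real q * \<alpha>$i\<bar> \<le> real P * norm \<alpha>"
          by (simp add: abs_mult mult_mono)
        then have "\<bar>of_int (b$i)\<bar> \<le> real P * norm \<alpha> + z j / c"
          using nb \<open>\<bar>approx_vec \<alpha> q b $ i\<bar> \<le> norm (approx_vec \<alpha> q b)\<close>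
            \<open>approx_vec \<alpha> q b $ i = real q * \<alpha>$i - of_int (b$i)\<close> by linarith
        then have "real_of_int \<bar>b$i\<bar> \<le> real P * norm \<alpha> + z j / c" by simp
        then show ?thesis unfolding L_def by (metis ceiling_mono ceiling_of_int)
      qed
      then show "s \<in> {1..P} \<times> {b::int^'n. \<forall>i. \<bar>b$i\<bar> \<le> L}" using s q by auto
    qed
    moreover have "finite ({1..P} \<times> {b::int^'n. \<forall>i. \<bar>b$i\<bar> \<le> L})"
      using finite_intvec[of L] by (intro finite_SigmaI) auto
    ultimately show ?thesis by (rule finite_subset)
  qed
  define \<mu> where "\<mu> = Min (F ` S)"
  have muS: "\<mu> \<in> F ` S" using finS s0 unfolding \<mu>_def by (intro Min_in) auto
  have mule: "\<mu> \<le> F s" if "s \<in> S" for s using finS that unfolding \<mu>_def by simp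
  define M where "M = {s\<in>S. F s = \<mu>}"
  have finM: "finite M" using finS by (simp add: M_def)
  have neM: "M \<noteq> {}" using muS by (auto simp: M_def)
  define qs where "qs = Min (fst ` M)"
  have "qs \<in> fst ` M" using finM neM unfolding qs_def by (intro Min_in) auto
  then obtain bs where sM: "(qs, bs) \<in> M" by force
  have qsle: "qs \<le> fst s" if "s \<in> M" for s using finM that unfolding qs_def by simp
  have sS: "(qs, bs) \<in> S" and Fs: "F (qs, bs) = \<mu>" using sM by (auto simp: M_def)
  have qs1: "1 \<le> qs" "qs \<le> P - 1" and muz: "\<mu> < z j" using sS Fs by (auto simp: S_def)
  have best: "best_approx f \<alpha> qs bs"
    unfolding best_approx_def
  proof (intro conjI allI impI)
    show "1 \<le> qs" by (rule qs1(1))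
  next
    fix q b assume q: "1 \<le> q \<and> q \<le> qs - 1"
    show "f (approx_vec \<alpha> qs bs) < f (approx_vec \<alpha> q b)"
    proof (rule ccontr)
      assume "\<not> ?thesis"
      then have le: "F (q, b) \<le> \<mu>" using Fs by (simp add: F_def)
      then have inS: "(q, b) \<in> S" using q qs1 muz by (auto simp: S_def)
      then have "F (q, b) = \<mu>" using mule le by force
      then have "(q, b) \<in> M" using inS by (simp add: M_def)
      then have "qs \<le> q" using qsle by force
      then show False using q qs1 by linarith
    qed
  next
    fix b assume bne: "b \<noteq> bs"
    show "f (approx_vec \<alpha> qs bs) < f (approx_vec \<alpha> qs b)"
    proof (rule ccontr)
      assume "\<not> ?thesis"
      then have le: "F (qs, b) \<le> \<mu>" using Fs by (simp add: F_def)
      have "f (approx_vec \<alpha> qs b - approx_vec \<alpha> qs bs) \<le> F (qs, b) + F (qs, bs)"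
        using nf_diff_le[OF nf] by (simp add: F_def)
      also have "\<dots> \<le> 2 * \<mu>" using le Fs by simp
      also have "\<dots> < c" using muz zj by simp
      finally have lt: "f (approx_vec \<alpha> qs b - approx_vec \<alpha> qs bs) < c" .
      obtain i where i: "b$i \<noteq> bs$i" using bne by (metis vec_eq_iff)
      have "approx_vec \<alpha> qs b - approx_vec \<alpha> qs bs = (\<chi> k. of_int (bs$k - b$k))"
        by (simp add: approx_vec_def vec_eq_iff)
      then have "(approx_vec \<alpha> qs b - approx_vec \<alpha> qs bs) $ i = of_int (bs$i - b$i)" by simp
      moreover have "\<bar>of_int (bs$i - b$i) :: real\<bar> \<ge> 1" using i by linarith
      ultimately have "1 \<le> norm (approx_vec \<alpha> qs b - approx_vec \<alpha> qs bs)"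
        by (metis component_le_norm_cart order_trans)
      then have "c \<le> c * norm (approx_vec \<alpha> qs b - approx_vec \<alpha> qs bs)" using c(1) by simp
      then show False using c(2) lt by (meson le_less_trans less_le_not_le order_trans)
    qed
  qed
  obtain \<nu> where nu: "\<nu> \<ge> 1" "qs = p \<nu>" "bs = a \<nu>" using all best by blast
  have "z \<nu> = \<mu>" using Fs nu by (simp add: z_def xi_def F_def)
  then have "z \<nu> < z j" using muz by simp
  then have "j < \<nu>" using z_le[OF nu(1), of j] z_le[OF j, of \<nu>] by (meson leI not_le)
  then have "P \<le> p \<nu>" unfolding P_def using p_less[of "Suc j" \<nu>] j by (cases "Suc j = \<nu>") auto
  then show False using qs1 nu ltP by linarith
qed

lemma decay:
  assumes pk: "\<forall>P. P \<subseteq> {x. f x \<le> 1} \<longrightarrow> (\<forall>x\<in>P. \<forall>y\<in>P. x \<noteq> y \<longrightarrow> 1/2 < f (x - y)) \<longrightarrow> card P \<le> N"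
    and j: "1 \<le> j"
  shows "z (j + N) \<le> z j / 2"
proof (rule ccontr)
  assume H: "\<not> ?thesis"
  have zj: "0 < z j" using z_pos[OF j] .
  define X where "X i = (1 / z j) *\<^sub>R xi (j + i)" for i
  have fX: "f (X i) = z (j + i) / z j" for i
    using nf_hom[OF nf, of "1 / z j" "xi (j + i)"] zj by (simp add: X_def z_def)
  have sepX: "1/2 < f (X k - X i)" if "i < k" "k \<le> N" for i k
  proof -
    have "X k - X i = (1 / z j) *\<^sub>R (xi (j + k) - xi (j + i))" by (simp add: X_def algebra_simps)
    then have "f (X k - X i) = f (xi (j + k) - xi (j + i)) / z j"
      using nf_hom[OF nf, of "1 / z j"] zj by simp
    moreover have "z (j + k) < f (xi (j + k) - xi (j + i))" using sep[of "j + i" "j + k"] that j by simp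
    moreover have "z (j + N) \<le> z (j + k)" using z_le[of "j + k" "j + N"] that j by simp
    ultimately have "z (j + N) / z j < f (X k - X i)" using zj by (simp add: divide_strict_right_mono)
    moreover have "1/2 < z (j + N) / z j" using H zj by (simp add: field_simps)
    ultimately show ?thesis by linarith
  qed
  have sepX2: "1/2 < f (X k - X i)" if "i \<noteq> k" "k \<le> N" "i \<le> N" for i k
  proof (cases "i < k")
    case True then show ?thesis using sepX that by blast
  next
    case False then have "k < i" using that by simp
    then show ?thesis using sepX[of k i] that nf_sym[OF nf, of "X k" "X i"] by simp
  qed
  have inj: "inj_on X {0..N}"
  proof (rule inj_onI, rule ccontr)
    fix i k assume "i \<in> {0..N}" "k \<in> {0..N}" "X i = X k" "i \<noteq> k"
    then show False using sepX2[of i k] nf_zero[OF nf, of 0] by simp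
  qed
  have sub: "X ` {0..N} \<subseteq> {x. f x \<le> 1}"
  proof
    fix x assume "x \<in> X ` {0..N}"
    then obtain i where "x = X i" by blast
    moreover have "z (j + i) \<le> z j" using z_le[of j "j + i"] j by simp
    ultimately show "x \<in> {x. f x \<le> 1}" using fX zj by simp
  qed
  have "\<forall>x\<in>X ` {0..N}. \<forall>y\<in>X ` {0..N}. x \<noteq> y \<longrightarrow> 1/2 < f (x - y)"
  proof (intro ballI impI)
    fix x y assume "x \<in> X ` {0..N}" "y \<in> X ` {0..N}" "x \<noteq> y"
    then obtain i k where "x = X k" "y = X i" "i \<le> N" "k \<le> N" "i \<noteq> k" by (metis atLeastAtMost_iff imageE)
    then show "1/2 < f (x - y)" using sepX2[of i k] by simp
  qed
  then have "card (X ` {0..N}) \<le> N" using pk sub by blast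
  moreover have "card (X ` {0..N}) = Suc N" using card_image[OF inj] by simp
  ultimately show False by simp
qed

end


context bseq begin

lemma window:
  assumes c: "c > 0" "\<forall>x. c * norm x \<le> f x" and C: "\<forall>x. f x \<le> C * norm x"
    and pk: "\<forall>P. P \<subseteq> {x. f x \<le> 1} \<longrightarrow> (\<forall>x\<in>P. \<forall>y\<in>P. x \<noteq> y \<longrightarrow> 1/2 < f (x - y)) \<longrightarrow> card P \<le> N"
    and N1: "1 \<le> N"
    and geo: "\<forall>u v r. f u = 1 \<longrightarrow> f v = 1 \<longrightarrow> 0 < r \<longrightarrow> r < 1 - 1 / (4 * real N) \<longrightarrow>
            1 \<le> f (u - r *\<^sub>R v) \<longrightarrow> f (u - v) \<le> 1 + \<delta> \<longrightarrow> False"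
    and T: "C * real CARD('n) / 2 ^ T < c / 2"
    and nu: "1 \<le> \<nu>"
  shows "\<exists>j. \<nu> \<le> j \<and> j \<le> \<nu> + (T * N + N) \<and>
        (let \<Xi> = (\<lambda>k. (1 / f (approx_vec \<alpha> (p k) (a k))) *\<^sub>R approx_vec \<alpha> (p k) (a k))
         in \<Xi> (j + 1) \<notin> fball f (1 + \<delta>) (\<Xi> j))"
proof (rule ccontr)
  assume H: "\<not> ?thesis"
  define \<Xi> where "\<Xi> k = (1 / z k) *\<^sub>R xi k" for k
  define \<rho> where "\<rho> = 1 - 1 / (4 * real N)"
  have H2: "f (\<Xi> (Suc j) - \<Xi> j) \<le> 1 + \<delta>" if "\<nu> \<le> j" "j \<le> \<nu> + (T * N + N)" for j
    using H that unfolding \<Xi>_def z_def xi_def fball_def Let_def by auto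
  have dec: "z (\<nu> + t * N) \<le> z \<nu> / 2 ^ t" for t
  proof (induction t)
    case 0 then show ?case by simp
  next
    case (Suc t)
    have "z (\<nu> + Suc t * N) = z ((\<nu> + t * N) + N)" by (simp add: algebra_simps)
    also have "\<dots> \<le> z (\<nu> + t * N) / 2" using decay[OF pk] nu by simp
    also have "\<dots> \<le> (z \<nu> / 2 ^ t) / 2" using Suc by simp
    finally show ?case by simp
  qed
  define j0 where "j0 = \<nu> + T * N"
  have j01: "1 \<le> j0" using nu by (simp add: j0_def)
  have zj0: "z j0 < c / 2"
  proof -
    have "z j0 \<le> z \<nu> / 2 ^ T" using dec[of T] by (simp add: j0_def)
    also have "\<dots> \<le> C * real CARD('n) / 2 ^ T" using z_bound[OF C nu] by (simp add: divide_right_mono)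
    finally show ?thesis using T by linarith
  qed
  have ratio: "\<rho> * z j \<le> z (Suc j)" if "j0 \<le> j" "j < j0 + N" for j
  proof (rule ccontr)
    assume R: "\<not> ?thesis"
    have j1: "1 \<le> j" using that j01 by simp
    have zjp: "0 < z j" "0 < z (Suc j)" using z_pos j1 by auto
    have zjc: "z j < c / 2" using z_le[OF j01 that(1)] zj0 by simp
    define r where "r = z (Suc j) / z j"
    have r0: "0 < r" using zjp by (simp add: r_def)
    have rr: "r < \<rho>" using R zjp by (simp add: r_def field_simps mult.commute)
    have fu: "f (\<Xi> j) = 1" and fv: "f (\<Xi> (Suc j)) = 1"
      using nf_hom[OF nf, of "1 / z j" "xi j"] nf_hom[OF nf, of "1 / z (Suc j)" "xi (Suc j)"] zjp
      by (simp_all add: \<Xi>_def z_def)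
    have "\<Xi> j - r *\<^sub>R \<Xi> (Suc j) = (1 / z j) *\<^sub>R (xi j - xi (Suc j))"
      using zjp by (simp add: \<Xi>_def r_def algebra_simps)
    then have "f (\<Xi> j - r *\<^sub>R \<Xi> (Suc j)) = f (xi (Suc j) - xi j) / z j"
      using nf_hom[OF nf, of "1 / z j" "xi j - xi (Suc j)"] zjp nf_sym[OF nf, of "xi j" "xi (Suc j)"] by simp
    moreover have "z j \<le> f (xi (Suc j) - xi j)" using key[OF c j1 zjc] .
    ultimately have h1: "1 \<le> f (\<Xi> j - r *\<^sub>R \<Xi> (Suc j))" using zjp by simp
    have "f (\<Xi> j - \<Xi> (Suc j)) \<le> 1 + \<delta>"
      using H2[of j] that nf_sym[OF nf, of "\<Xi> j" "\<Xi> (Suc j)"] by (simp add: j0_def)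
    then show False using geo fu fv r0 rr h1 unfolding \<rho>_def by blast
  qed
  have grow: "\<rho> ^ i * z j0 \<le> z (j0 + i)" if "i \<le> N" for i
    using that
  proof (induction i)
    case 0 then show ?case by simp
  next
    case (Suc i)
    have rho0: "0 \<le> \<rho>" using N1 by (simp add: \<rho>_def field_simps)
    have "\<rho> ^ Suc i * z j0 = \<rho> * (\<rho> ^ i * z j0)" by simp
    also have "\<dots> \<le> \<rho> * z (j0 + i)" using Suc rho0 by (simp add: mult_left_mono)
    also have "\<dots> \<le> z (Suc (j0 + i))" using ratio[of "j0 + i"] Suc by simp
    finally show ?case by simp
  qed
  have "1 + real N * (- 1 / (4 * real N)) \<le> (1 + (- 1 / (4 * real N))) ^ N"
    using N1 by (intro Bernoulli_inequality) (simp add: field_simps)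
  then have b: "3/4 \<le> \<rho> ^ N" using N1 by (simp add: \<rho>_def)
  have zp: "0 < z j0" using z_pos[OF j01] .
  have "3/4 * z j0 \<le> z (j0 + N)" using grow[of N] b zp by (meson order_trans mult_right_mono less_imp_le order_refl)
  moreover have "z (j0 + N) \<le> z j0 / 2" using decay[OF pk j01] .
  ultimately show False using zp by simp
qed

end


theorem theorem2p5:
  fixes D :: real and f :: "real ^ 'n \<Rightarrow> real"
  assumes "D > 0" and "strictly_convex_norm f"
  shows "\<exists>w::nat. \<exists>\<delta>>0. \<forall>(\<alpha>::real ^ 'n) (p::nat \<Rightarrow> nat) (a::nat \<Rightarrow> int ^ 'n).
     badly_approx_const \<alpha> D \<longrightarrow>
     strict_mono_on {1..} p \<longrightarrow>
     (\<forall>\<nu>\<ge>1. best_approx f \<alpha> (p \<nu>) (a \<nu>)) \<longrightarrow>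
     (\<forall>q b. best_approx f \<alpha> q b \<longrightarrow> (\<exists>\<nu>\<ge>1. q = p \<nu> \<and> b = a \<nu>)) \<longrightarrow>
     (\<forall>\<nu>\<ge>1. \<exists>j. \<nu> \<le> j \<and> j \<le> \<nu> + w \<and>
        (let \<Xi> = (\<lambda>k. (1 / f (approx_vec \<alpha> (p k) (a k))) *\<^sub>R approx_vec \<alpha> (p k) (a k))
         in \<Xi> (j + 1) \<notin> fball f (1 + \<delta>) (\<Xi> j)))"
proof -
  have nf: "is_norm_fun f" using assms(2) by (simp add: strictly_convex_norm_def)
  obtain c where c: "c > 0" "\<forall>x. c * norm x \<le> f x" using nf_lower[OF nf] by blast
  obtain C where C: "C > 0" "\<forall>x. f x \<le> C * norm x" using nf_upper[OF nf] by blast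
  obtain N0 where N0: "\<forall>P. P \<subseteq> {x. f x \<le> 1} \<longrightarrow> (\<forall>x\<in>P. \<forall>y\<in>P. x \<noteq> y \<longrightarrow> 1/2 < f (x - y)) \<longrightarrow> card P \<le> N0"
    using packing[OF nf] by blast
  define N where "N = max N0 1"
  have N1: "1 \<le> N" by (simp add: N_def)
  have pk: "\<forall>P. P \<subseteq> {x. f x \<le> 1} \<longrightarrow> (\<forall>x\<in>P. \<forall>y\<in>P. x \<noteq> y \<longrightarrow> 1/2 < f (x - y)) \<longrightarrow> card P \<le> N"
    using N0 unfolding N_def by (meson le_trans max.cobounded1)
  have "1 - 1 / (4 * real N) < 1" using N1 by simp
  from geo_delta[OF assms(2) this] obtain \<delta> where d: "\<delta> > 0"
    and geo: "\<forall>u v r. f u = 1 \<longrightarrow> f v = 1 \<longrightarrow> 0 < r \<longrightarrow> r < 1 - 1 / (4 * real N) \<longrightarrow>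
            1 \<le> f (u - r *\<^sub>R v) \<longrightarrow> f (u - v) \<le> 1 + \<delta> \<longrightarrow> False" by blast
  define A where "A = C * real CARD('n)"
  have A: "A > 0" using C by (simp add: A_def)
  obtain T where T0: "(1/2::real) ^ T < c / (2 * A)"
    using real_arch_pow_inv[of "c / (2 * A)" "1/2"] c A by auto
  have T: "C * real CARD('n) / 2 ^ T < c / 2"
  proof -
    have "A * (1/2) ^ T < A * (c / (2 * A))" using mult_strict_left_mono[OF T0 A] .
    moreover have "A * (c / (2 * A)) = c / 2" using A by simp
    moreover have "C * real CARD('n) / 2 ^ T = A * (1/2) ^ T" unfolding A_def power_one_over by simp
    ultimately show ?thesis by linarith
  qed
  show ?thesis
  proof (rule exI[of _ "T * N + N"], rule exI[of _ \<delta>], intro conjI d allI impI)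
    fix \<alpha> :: "real^'n" and p :: "nat \<Rightarrow> nat" and a :: "nat \<Rightarrow> int^'n" and \<nu> :: nat
    assume h: "badly_approx_const \<alpha> D" "strict_mono_on {1..} p"
      "\<forall>\<nu>\<ge>1. best_approx f \<alpha> (p \<nu>) (a \<nu>)"
      "\<forall>q b. best_approx f \<alpha> q b \<longrightarrow> (\<exists>\<nu>\<ge>1. q = p \<nu> \<and> b = a \<nu>)" and nu: "1 \<le> \<nu>"
    interpret bseq f \<alpha> p a using nf h(2-4) by unfold_locales
    show "\<exists>j. \<nu> \<le> j \<and> j \<le> \<nu> + (T * N + N) \<and>
        (let \<Xi> = (\<lambda>k. (1 / f (approx_vec \<alpha> (p k) (a k))) *\<^sub>R approx_vec \<alpha> (p k) (a k))
         in \<Xi> (j + 1) \<notin> fball f (1 + \<delta>) (\<Xi> j))"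
      by (rule window[OF c C(2) pk N1 geo T nu])
  qed
qed


end
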